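(* In any correlational scenario with finite setting and outcome sets, the set $\mathcal{DC}$ of deterministically consistent correlations is convex and equals the convex hull of the deterministic correlations it contains; in particular it is a convex polytope all of whose vertices are deterministic correlations.
   Context: Parties $S_1,\dots,S_N$ with finite setting sets $A_k$ and outcome sets $X_k$; a correlation is a conditional distribution $p(\vec x|\vec a)$; deterministic correlations are those of the form $\delta_{\vec x,f(\vec a)}$. For finite sets $I_k,O_k$, a conditional distribution $p(\vec i|\vec o)$ is a classical process if for all finite $A_k,X_k$ and all local interventions $p(x_k,o_k|a_k,i_k)$ the expression $\sum_{\vec i,\vec o}\prod_k p(x_k,o_k|a_k,i_k)p(\vec i|\vec o)$ is a valid conditional probability distribution over $\vec x$ for each $\vec a$. A process function is a function $\omega:\vec O\to\vec I$ with $\delta_{\vec i,\omega(\vec o)}$ a classical process. The deterministic-extrema polytope (for given $I_k,O_k$) is the convex hull of $\{\delta_{\vec i,\omega(\vec o)}\}$ over process functions $\omega$. A correlation is deterministically consistent if it equals $\sum_{\vec i,\vec o}\prod_k p(x_k,o_k|a_k,i_k)p(\vec i|\vec o)$ for some finite $I_k,O_k$, local interventions, and $p(\vec i|\vec o)$ in the deterministic-extrema polytope. *)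

theory Defs
  imports "HOL-Analysis.Analysis" "HOL-Library.Function_Algebras"
begin

instantiation "fun" :: (type, real_vector) real_vector
begin
definition scaleR_fun :: "real \<Rightarrow> ('a \<Rightarrow> 'b) \<Rightarrow> 'a \<Rightarrow> 'b" where
  "scaleR_fun r f = (\<lambda>x. r *\<^sub>R f x)"
instance
  by standard (simp_all add: scaleR_fun_def fun_eq_iff plus_fun_def scaleR_add_right scaleR_add_left)
end

text \<open>Parties are indexed by k < N. Tuples of settings/outcomes are extensional
  functions in PiE {..<N}. A correlation p(x|a) is represented as p a x, set to 0
  outside the set of valid tuples.\<close>

definition is_correlation ::
  "nat \<Rightarrow> (nat \<Rightarrow> 'a set) \<Rightarrow> (nat \<Rightarrow> 'x set) \<Rightarrow> ((nat \<Rightarrow> 'a) \<Rightarrow> (nat \<Rightarrow> 'x) \<Rightarrow> real) \<Rightarrow> bool" where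
  "is_correlation N A X p \<longleftrightarrow>
     (\<forall>a x. p a x \<noteq> 0 \<longrightarrow> a \<in> Pi\<^sub>E {..<N} A \<and> x \<in> Pi\<^sub>E {..<N} X) \<and>
     (\<forall>a \<in> Pi\<^sub>E {..<N} A. \<forall>x \<in> Pi\<^sub>E {..<N} X. 0 \<le> p a x) \<and>
     (\<forall>a \<in> Pi\<^sub>E {..<N} A. (\<Sum>x \<in> Pi\<^sub>E {..<N} X. p a x) = 1)"

definition deterministic_correlation ::
  "nat \<Rightarrow> (nat \<Rightarrow> 'a set) \<Rightarrow> (nat \<Rightarrow> 'x set) \<Rightarrow> ((nat \<Rightarrow> 'a) \<Rightarrow> (nat \<Rightarrow> 'x) \<Rightarrow> real) \<Rightarrow> bool" where
  "deterministic_correlation N A X p \<longleftrightarrow>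
     (\<exists>f. f \<in> Pi\<^sub>E {..<N} A \<rightarrow> Pi\<^sub>E {..<N} X \<and>
          p = (\<lambda>a x. if a \<in> Pi\<^sub>E {..<N} A \<and> x = f a then 1 else 0))"

text \<open>A local intervention p(x_k,o_k|a_k,i_k) of one party, written L a i x u.\<close>

definition local_intervention ::
  "'a set \<Rightarrow> 'i set \<Rightarrow> 'x set \<Rightarrow> 'o set \<Rightarrow> ('a \<Rightarrow> 'i \<Rightarrow> 'x \<Rightarrow> 'o \<Rightarrow> real) \<Rightarrow> bool" where
  "local_intervention A I X Q L \<longleftrightarrow>
     (\<forall>a \<in> A. \<forall>i \<in> I.
        (\<forall>x \<in> X. \<forall>u \<in> Q. 0 \<le> L a i x u) \<and>
        (\<Sum>(x, u) \<in> X \<times> Q. L a i x u) = 1)"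

text \<open>The correlation sum_{i,o} prod_k p(x_k,o_k|a_k,i_k) p(i|o); here P i u = p(i|o).\<close>

definition compose ::
  "nat \<Rightarrow> (nat \<Rightarrow> 'a set) \<Rightarrow> (nat \<Rightarrow> 'x set) \<Rightarrow> (nat \<Rightarrow> nat set) \<Rightarrow> (nat \<Rightarrow> nat set)
   \<Rightarrow> (nat \<Rightarrow> 'a \<Rightarrow> nat \<Rightarrow> 'x \<Rightarrow> nat \<Rightarrow> real) \<Rightarrow> ((nat \<Rightarrow> nat) \<Rightarrow> (nat \<Rightarrow> nat) \<Rightarrow> real)
   \<Rightarrow> (nat \<Rightarrow> 'a) \<Rightarrow> (nat \<Rightarrow> 'x) \<Rightarrow> real" where
  "compose N A X I Q L P = (\<lambda>a x.
     if a \<in> Pi\<^sub>E {..<N} A \<and> x \<in> Pi\<^sub>E {..<N} X then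
       (\<Sum>i \<in> Pi\<^sub>E {..<N} I. \<Sum>u \<in> Pi\<^sub>E {..<N} Q.
          (\<Prod>k<N. L k (a k) (i k) (x k) (u k)) * P i u)
     else 0)"

definition cond_dist_process ::
  "nat \<Rightarrow> (nat \<Rightarrow> nat set) \<Rightarrow> (nat \<Rightarrow> nat set) \<Rightarrow> ((nat \<Rightarrow> nat) \<Rightarrow> (nat \<Rightarrow> nat) \<Rightarrow> real) \<Rightarrow> bool" where
  "cond_dist_process N I Q P \<longleftrightarrow>
     (\<forall>u \<in> Pi\<^sub>E {..<N} Q.
        (\<forall>i \<in> Pi\<^sub>E {..<N} I. 0 \<le> P i u) \<and> (\<Sum>i \<in> Pi\<^sub>E {..<N} I. P i u) = 1)"

text \<open>The quantification over all finite setting/outcome sets of the auxiliary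
  parties is over finite sets of natural numbers (every finite set is in bijection
  with one of these).\<close>

definition classical_process ::
  "nat \<Rightarrow> (nat \<Rightarrow> nat set) \<Rightarrow> (nat \<Rightarrow> nat set) \<Rightarrow> ((nat \<Rightarrow> nat) \<Rightarrow> (nat \<Rightarrow> nat) \<Rightarrow> real) \<Rightarrow> bool" where
  "classical_process N I Q P \<longleftrightarrow>
     (\<forall>k<N. finite (I k) \<and> finite (Q k)) \<and>
     cond_dist_process N I Q P \<and>
     (\<forall>(A' :: nat \<Rightarrow> nat set) (X' :: nat \<Rightarrow> nat set) L.
        (\<forall>k<N. finite (A' k) \<and> finite (X' k)) \<longrightarrow>
        (\<forall>k<N. local_intervention (A' k) (I k) (X' k) (Q k) (L k)) \<longrightarrow>
        is_correlation N A' X' (compose N A' X' I Q L P))"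

definition delta_process ::
  "nat \<Rightarrow> (nat \<Rightarrow> nat set) \<Rightarrow> ((nat \<Rightarrow> nat) \<Rightarrow> (nat \<Rightarrow> nat)) \<Rightarrow> (nat \<Rightarrow> nat) \<Rightarrow> (nat \<Rightarrow> nat) \<Rightarrow> real" where
  "delta_process N Q \<omega> = (\<lambda>i u. if u \<in> Pi\<^sub>E {..<N} Q \<and> i = \<omega> u then 1 else 0)"

definition process_function ::
  "nat \<Rightarrow> (nat \<Rightarrow> nat set) \<Rightarrow> (nat \<Rightarrow> nat set) \<Rightarrow> ((nat \<Rightarrow> nat) \<Rightarrow> (nat \<Rightarrow> nat)) \<Rightarrow> bool" where
  "process_function N I Q \<omega> \<longleftrightarrow>
     \<omega> \<in> Pi\<^sub>E {..<N} Q \<rightarrow> Pi\<^sub>E {..<N} I \<and> classical_process N I Q (delta_process N Q \<omega>)"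

definition det_extrema_polytope ::
  "nat \<Rightarrow> (nat \<Rightarrow> nat set) \<Rightarrow> (nat \<Rightarrow> nat set) \<Rightarrow> ((nat \<Rightarrow> nat) \<Rightarrow> (nat \<Rightarrow> nat) \<Rightarrow> real) set" where
  "det_extrema_polytope N I Q =
     convex hull {delta_process N Q \<omega> | \<omega>. process_function N I Q \<omega>}"

definition DC ::
  "nat \<Rightarrow> (nat \<Rightarrow> 'a set) \<Rightarrow> (nat \<Rightarrow> 'x set) \<Rightarrow> ((nat \<Rightarrow> 'a) \<Rightarrow> (nat \<Rightarrow> 'x) \<Rightarrow> real) set" where
  "DC N A X = {p. is_correlation N A X p \<and>
     (\<exists>(I :: nat \<Rightarrow> nat set) (Q :: nat \<Rightarrow> nat set) L P.
        (\<forall>k<N. finite (I k) \<and> finite (Q k)) \<and>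
        (\<forall>k<N. local_intervention (A k) (I k) (X k) (Q k) (L k)) \<and>
        P \<in> det_extrema_polytope N I Q \<and>
        p = compose N A X I Q L P)}"

end

theory Submission
  imports Defs
begin


lemma sum_fun_apply: "finite T \<Longrightarrow> (\<Sum>s\<in>T. f s) x = (\<Sum>s\<in>T. f s x)"
  by (induction T rule: finite_induct) (auto simp: plus_fun_def)

lemma sum_Nats: "(\<And>x. x \<in> S \<Longrightarrow> f x \<in> \<nat>) \<Longrightarrow> sum f S \<in> (\<nat>::real set)"
proof (cases "finite S")
  case True
  then show "(\<And>x. x \<in> S \<Longrightarrow> f x \<in> \<nat>) \<Longrightarrow> sum f S \<in> \<nat>"
    by (induction S rule: finite_induct) auto
qed simp

lemma prod_Nats: "(\<And>x. x \<in> S \<Longrightarrow> f x \<in> \<nat>) \<Longrightarrow> prod f S \<in> (\<nat>::real set)"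
proof (cases "finite S")
  case True
  then show "(\<And>x. x \<in> S \<Longrightarrow> f x \<in> \<nat>) \<Longrightarrow> prod f S \<in> \<nat>"
    by (induction S rule: finite_induct) auto
qed simp

lemma compose_delta:
  assumes om: "\<omega> \<in> Pi\<^sub>E {..<N} Q \<rightarrow> Pi\<^sub>E {..<N} I" and fin: "\<forall>k<N. finite (I k)"
  shows "compose N A X I Q L (delta_process N Q \<omega>) a x =
    (if a \<in> Pi\<^sub>E {..<N} A \<and> x \<in> Pi\<^sub>E {..<N} X then
      (\<Sum>u\<in>Pi\<^sub>E {..<N} Q. \<Prod>k<N. L k (a k) (\<omega> u k) (x k) (u k)) else 0)"
proof -
  have finI: "finite (Pi\<^sub>E {..<N} I)" using fin by (intro finite_PiE) auto
  have "(\<Sum>i \<in> Pi\<^sub>E {..<N} I. \<Sum>u \<in> Pi\<^sub>E {..<N} Q.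
          (\<Prod>k<N. L k (a k) (i k) (x k) (u k)) * delta_process N Q \<omega> i u)
      = (\<Sum>u \<in> Pi\<^sub>E {..<N} Q. \<Sum>i \<in> Pi\<^sub>E {..<N} I.
          (\<Prod>k<N. L k (a k) (i k) (x k) (u k)) * delta_process N Q \<omega> i u)"
    by (rule sum.swap)
  also have "\<dots> = (\<Sum>u\<in>Pi\<^sub>E {..<N} Q. \<Prod>k<N. L k (a k) (\<omega> u k) (x k) (u k))"
  proof (rule sum.cong[OF refl])
    fix u assume u: "u \<in> Pi\<^sub>E {..<N} Q"
    have "(\<Sum>i \<in> Pi\<^sub>E {..<N} I. (\<Prod>k<N. L k (a k) (i k) (x k) (u k)) * delta_process N Q \<omega> i u)
       = (\<Sum>i \<in> Pi\<^sub>E {..<N} I. if \<omega> u = i then (\<Prod>k<N. L k (a k) (i k) (x k) (u k)) else 0)"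
      using u by (intro sum.cong) (auto simp: delta_process_def)
    also have "\<dots> = (\<Prod>k<N. L k (a k) (\<omega> u k) (x k) (u k))"
      using finI om u by (subst sum.delta') auto
    finally show "(\<Sum>i \<in> Pi\<^sub>E {..<N} I. (\<Prod>k<N. L k (a k) (i k) (x k) (u k)) * delta_process N Q \<omega> i u)
       = (\<Prod>k<N. L k (a k) (\<omega> u k) (x k) (u k))" .
  qed
  finally show ?thesis unfolding compose_def by simp
qed

lemma cond_dist_delta:
  assumes om: "\<omega> \<in> Pi\<^sub>E {..<N} Q \<rightarrow> Pi\<^sub>E {..<N} I" and fin: "\<forall>k<N. finite (I k)"
  shows "cond_dist_process N I Q (delta_process N Q \<omega>)"
proof -
  have finI: "finite (Pi\<^sub>E {..<N} I)" using fin by (intro finite_PiE) auto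
  show ?thesis unfolding cond_dist_process_def
  proof (intro ballI)
    fix u assume u: "u \<in> Pi\<^sub>E {..<N} Q"
    have nn: "\<forall>i\<in>Pi\<^sub>E {..<N} I. 0 \<le> delta_process N Q \<omega> i u" by (auto simp: delta_process_def)
    have "(\<Sum>i\<in>Pi\<^sub>E {..<N} I. delta_process N Q \<omega> i u) = (\<Sum>i\<in>Pi\<^sub>E {..<N} I. if \<omega> u = i then 1 else 0)"
      using u by (intro sum.cong) (auto simp: delta_process_def)
    also have "\<dots> = 1" using finI om u by (subst sum.delta') auto
    finally have "(\<Sum>i\<in>Pi\<^sub>E {..<N} I. delta_process N Q \<omega> i u) = 1" .
    with nn show "(\<forall>i\<in>Pi\<^sub>E {..<N} I. 0 \<le> delta_process N Q \<omega> i u) \<and> (\<Sum>i\<in>Pi\<^sub>E {..<N} I. delta_process N Q \<omega> i u) = 1" by blast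
  qed
qed

lemma transfer:
  fixes A :: "nat \<Rightarrow> 'a set" and X :: "nat \<Rightarrow> 'x set"
  assumes cp: "classical_process N I Q P" and fin: "\<forall>k<N. finite (A k) \<and> finite (X k)"
   and li: "\<forall>k<N. local_intervention (A k) (I k) (X k) (Q k) (L k)"
  shows "is_correlation N A X (compose N A X I Q L P)"
proof -
  have finIQ: "\<forall>k<N. finite (I k) \<and> finite (Q k)" and cd: "cond_dist_process N I Q P"
   and cl: "\<And>(A' :: nat \<Rightarrow> nat set) (X' :: nat \<Rightarrow> nat set) L.
        (\<forall>k<N. finite (A' k) \<and> finite (X' k)) \<Longrightarrow>
        (\<forall>k<N. local_intervention (A' k) (I k) (X' k) (Q k) (L k)) \<Longrightarrow>
        is_correlation N A' X' (compose N A' X' I Q L P)"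
    using cp unfolding classical_process_def by blast+
  have finX: "finite (Pi\<^sub>E {..<N} X)" using fin by (intro finite_PiE) auto
  show ?thesis unfolding is_correlation_def
  proof (intro conjI)
    show "\<forall>a x. compose N A X I Q L P a x \<noteq> 0 \<longrightarrow> a \<in> Pi\<^sub>E {..<N} A \<and> x \<in> Pi\<^sub>E {..<N} X"
      by (auto simp: compose_def)
  next
    show "\<forall>a\<in>Pi\<^sub>E {..<N} A. \<forall>x\<in>Pi\<^sub>E {..<N} X. 0 \<le> compose N A X I Q L P a x"
    proof (intro ballI)
    fix a x assume a: "a \<in> Pi\<^sub>E {..<N} A" and x: "x \<in> Pi\<^sub>E {..<N} X"
    show "0 \<le> compose N A X I Q L P a x"
      unfolding compose_def using a x
      apply (simp)
      apply (intro sum_nonneg mult_nonneg_nonneg prod_nonneg)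
      using li cd unfolding local_intervention_def cond_dist_process_def
      by (auto simp: PiE_iff)
    qed
  next
    show "\<forall>a\<in>Pi\<^sub>E {..<N} A. (\<Sum>x\<in>Pi\<^sub>E {..<N} X. compose N A X I Q L P a x) = 1"
    proof
    fix a assume a: "a \<in> Pi\<^sub>E {..<N} A"
    define L' where "L' = (\<lambda>k (_::nat) i (_::nat) v. \<Sum>y\<in>X k. L k (a k) i y v)"
    define a0 where "a0 = (\<lambda>k\<in>{..<N}. (0::nat))"
    have single: "Pi\<^sub>E {..<N} (\<lambda>_. {0::nat}) = {a0}"
      unfolding a0_def by (subst PiE_eq_singleton) auto
    have li': "\<forall>k<N. local_intervention {0} (I k) {0} (Q k) (L' k)"
    proof (intro allI impI)
      fix k assume k: "k < N"
      have ak: "a k \<in> A k" using a k by auto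
      show "local_intervention {0} (I k) {0} (Q k) (L' k)"
        unfolding local_intervention_def
      proof (intro ballI)
        fix a' i assume i: "i \<in> I k"
        have nn: "\<forall>x\<in>{0}. \<forall>u\<in>Q k. 0 \<le> L' k a' i x u"
          using li k ak i unfolding local_intervention_def L'_def by (auto intro!: sum_nonneg)
        have "(\<Sum>(x, u)\<in>{0::nat} \<times> Q k. L' k a' i x u) = (\<Sum>u\<in>Q k. \<Sum>y\<in>X k. L k (a k) i y u)"
          unfolding L'_def by (simp add: sum.cartesian_product[symmetric])
        also have "\<dots> = (\<Sum>(y, u)\<in>X k \<times> Q k. L k (a k) i y u)"
          by (subst sum.swap) (simp add: sum.cartesian_product)
        also have "\<dots> = 1" using li k ak i unfolding local_intervention_def by auto
        finally show "(\<forall>x\<in>{0}. \<forall>u\<in>Q k. 0 \<le> L' k a' i x u) \<and> (\<Sum>(x, u)\<in>{0::nat} \<times> Q k. L' k a' i x u) = 1" using nn by blast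
      qed
    qed
    have corr: "is_correlation N (\<lambda>_. {0}) (\<lambda>_. {0}) (compose N (\<lambda>_. {0::nat}) (\<lambda>_. {0::nat}) I Q L' P)"
      by (rule cl) (use li' in auto)
    have a0in: "a0 \<in> Pi\<^sub>E {..<N} (\<lambda>_. {0::nat})" using single by auto
    have "1 = (\<Sum>x'\<in>Pi\<^sub>E {..<N} (\<lambda>_. {0::nat}). compose N (\<lambda>_. {0::nat}) (\<lambda>_. {0::nat}) I Q L' P a0 x')"
      using corr a0in unfolding is_correlation_def by auto
    also have "\<dots> = compose N (\<lambda>_. {0::nat}) (\<lambda>_. {0::nat}) I Q L' P a0 a0"
      using single by simp
    also have "\<dots> = (\<Sum>i \<in> Pi\<^sub>E {..<N} I. \<Sum>u \<in> Pi\<^sub>E {..<N} Q.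
          (\<Prod>k<N. \<Sum>y\<in>X k. L k (a k) (i k) y (u k)) * P i u)"
      using a0in unfolding compose_def L'_def by simp
    also have "\<dots> = (\<Sum>i \<in> Pi\<^sub>E {..<N} I. \<Sum>u \<in> Pi\<^sub>E {..<N} Q.
          (\<Sum>x\<in>Pi\<^sub>E {..<N} X. \<Prod>k<N. L k (a k) (i k) (x k) (u k)) * P i u)"
      using fin by (subst prod_sum_PiE) auto
    also have "\<dots> = (\<Sum>x\<in>Pi\<^sub>E {..<N} X. \<Sum>i \<in> Pi\<^sub>E {..<N} I. \<Sum>u \<in> Pi\<^sub>E {..<N} Q.
          (\<Prod>k<N. L k (a k) (i k) (x k) (u k)) * P i u)"
      by (simp add: sum_distrib_right sum.swap[of _ "Pi\<^sub>E {..<N} X"])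
    also have "\<dots> = (\<Sum>x\<in>Pi\<^sub>E {..<N} X. compose N A X I Q L P a x)"
      using a by (intro sum.cong) (auto simp: compose_def)
    finally show "(\<Sum>x\<in>Pi\<^sub>E {..<N} X. compose N A X I Q L P a x) = 1" by simp
    qed
  qed
qed



lemma Nats_ge1: "(y::real) \<in> \<nat> \<Longrightarrow> y \<noteq> 0 \<Longrightarrow> 1 \<le> y"
  by (auto elim!: Nats_cases)

lemma nat_det:
  assumes corr: "is_correlation N A X p" and nat: "\<forall>a x. p a x \<in> \<nat>"
    and finX: "finite (Pi\<^sub>E {..<N} X)"
  shows "deterministic_correlation N A X p"
proof -
  have supp: "\<And>a x. p a x \<noteq> 0 \<Longrightarrow> a \<in> Pi\<^sub>E {..<N} A \<and> x \<in> Pi\<^sub>E {..<N} X"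
   and nn: "\<And>a x. a \<in> Pi\<^sub>E {..<N} A \<Longrightarrow> x \<in> Pi\<^sub>E {..<N} X \<Longrightarrow> 0 \<le> p a x"
   and s1: "\<And>a. a \<in> Pi\<^sub>E {..<N} A \<Longrightarrow> (\<Sum>x \<in> Pi\<^sub>E {..<N} X. p a x) = 1"
    using corr unfolding is_correlation_def by (meson, meson, meson)
  have ex: "\<exists>x. x \<in> Pi\<^sub>E {..<N} X \<and> p a x \<noteq> 0" if a: "a \<in> Pi\<^sub>E {..<N} A" for a
  proof (rule ccontr)
    assume "\<not> ?thesis"
    then have "(\<Sum>x \<in> Pi\<^sub>E {..<N} X. p a x) = 0" by (intro sum.neutral) auto
    with s1[OF a] show False by simp
  qed
  have one: "p a x = 1" if a: "a \<in> Pi\<^sub>E {..<N} A" and x: "x \<in> Pi\<^sub>E {..<N} X" and nz: "p a x \<noteq> 0" for a x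
  proof -
    have "p a x \<le> (\<Sum>x \<in> Pi\<^sub>E {..<N} X. p a x)"
      using finX x nn[OF a] by (intro member_le_sum) auto
    moreover have "1 \<le> p a x" by (rule Nats_ge1) (use nat nz in auto)
    ultimately show ?thesis using s1[OF a] by simp
  qed
  have uniq: "x = y" if a: "a \<in> Pi\<^sub>E {..<N} A" and x: "x \<in> Pi\<^sub>E {..<N} X" and nz: "p a x \<noteq> 0"
     and y: "y \<in> Pi\<^sub>E {..<N} X" and nzy: "p a y \<noteq> 0" for a x y
  proof (rule ccontr)
    assume ne: "x \<noteq> y"
    have "(\<Sum>z \<in> {x, y}. p a z) \<le> (\<Sum>z \<in> Pi\<^sub>E {..<N} X. p a z)"
      using finX x y nn[OF a] by (intro sum_mono2) auto
    moreover have "(\<Sum>z \<in> {x, y}. p a z) = 2" using ne by (simp add: one[OF a x nz] one[OF a y nzy])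
    ultimately show False using s1[OF a] by simp
  qed
  define f where "f a = (SOME x. x \<in> Pi\<^sub>E {..<N} X \<and> p a x \<noteq> 0)" for a
  have f: "f a \<in> Pi\<^sub>E {..<N} X \<and> p a (f a) \<noteq> 0" if "a \<in> Pi\<^sub>E {..<N} A" for a
    unfolding f_def using someI_ex[OF ex[OF that]] .
  show ?thesis unfolding deterministic_correlation_def
  proof (intro exI conjI)
    show "f \<in> Pi\<^sub>E {..<N} A \<rightarrow> Pi\<^sub>E {..<N} X" by (rule Pi_I) (use f in blast)
    show "p = (\<lambda>a x. if a \<in> Pi\<^sub>E {..<N} A \<and> x = f a then 1 else 0)"
    proof (intro ext)
      fix a x
      show "p a x = (if a \<in> Pi\<^sub>E {..<N} A \<and> x = f a then 1 else 0)"
      proof (cases "p a x = 0")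
        case True
        show ?thesis
        proof (cases "a \<in> Pi\<^sub>E {..<N} A \<and> x = f a")
          case c: True
          then show ?thesis using f[of a] True by simp
        next
          case False
          then show ?thesis using True by simp
        qed
      next
        case False
        then have a: "a \<in> Pi\<^sub>E {..<N} A" and x: "x \<in> Pi\<^sub>E {..<N} X" using supp by auto
        have "x = f a" using uniq[OF a x False] f[OF a] by auto
        then show ?thesis using one[OF a x False] a by simp
      qed
    qed
  qed
qed

lemma pp:
  assumes fS: "finite S" and fT: "finite T" and s0: "s0 \<in> S" and t0: "t0 \<in> T"
    and h1: "\<forall>s\<in>S. sum (h s) T = (1::real)"
  shows "(\<Sum>g\<in>Pi\<^sub>E S (\<lambda>_. T). (\<Prod>s\<in>S. h s (g s)) * (if g s0 = t0 then 1 else 0)) = h s0 t0"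
proof -
  define h' where "h' s t = (if s = s0 then (if t = t0 then h s t else 0) else h s t)" for s t
  have "(\<Sum>g\<in>Pi\<^sub>E S (\<lambda>_. T). (\<Prod>s\<in>S. h s (g s)) * (if g s0 = t0 then 1 else 0))
      = (\<Sum>g\<in>Pi\<^sub>E S (\<lambda>_. T). (\<Prod>s\<in>S. h' s (g s)))"
  proof (intro sum.cong refl)
    fix g
    have "(\<Prod>s\<in>S. h' s (g s)) = h' s0 (g s0) * (\<Prod>s\<in>S - {s0}. h' s (g s))"
      using fS s0 by (simp add: prod.remove)
    also have "(\<Prod>s\<in>S - {s0}. h' s (g s)) = (\<Prod>s\<in>S - {s0}. h s (g s))"
      by (intro prod.cong) (auto simp: h'_def)
    also have "(\<Prod>s\<in>S. h s (g s)) = h s0 (g s0) * (\<Prod>s\<in>S - {s0}. h s (g s))"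
      using fS s0 by (simp add: prod.remove)
    ultimately show "(\<Prod>s\<in>S. h s (g s)) * (if g s0 = t0 then 1 else 0) = (\<Prod>s\<in>S. h' s (g s))"
      by (simp add: h'_def)
  qed
  also have "\<dots> = (\<Prod>s\<in>S. \<Sum>t\<in>T. h' s t)"
    using fS fT by (subst prod_sum_PiE) auto
  also have "\<dots> = (\<Sum>t\<in>T. h' s0 t) * (\<Prod>s\<in>S - {s0}. \<Sum>t\<in>T. h' s t)"
    using fS s0 by (simp add: prod.remove)
  also have "(\<Prod>s\<in>S - {s0}. \<Sum>t\<in>T. h' s t) = 1"
    using h1 by (intro prod.neutral) (auto simp: h'_def)
  also have "(\<Sum>t\<in>T. h' s0 t) = h s0 t0"
    using fT t0 by (simp add: h'_def)
  finally show ?thesis by simp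
qed

lemma compose_sum:
  assumes "finite T"
  shows "compose N A X I Q L (\<Sum>v\<in>T. c v *\<^sub>R V v) = (\<Sum>v\<in>T. c v *\<^sub>R compose N A X I Q L (V v))"
proof (intro ext)
  fix a x
  have e: "(\<Sum>v\<in>T. c v *\<^sub>R V v) i u = (\<Sum>v\<in>T. c v * V v i u)" for i u
    using assms by (simp add: sum_fun_apply scaleR_fun_def)
  show "compose N A X I Q L (\<Sum>v\<in>T. c v *\<^sub>R V v) a x = (\<Sum>v\<in>T. c v *\<^sub>R compose N A X I Q L (V v)) a x"
  proof (cases "a \<in> Pi\<^sub>E {..<N} A \<and> x \<in> Pi\<^sub>E {..<N} X")
    case True
    have "compose N A X I Q L (\<Sum>v\<in>T. c v *\<^sub>R V v) a x =
       (\<Sum>i \<in> Pi\<^sub>E {..<N} I. \<Sum>u \<in> Pi\<^sub>E {..<N} Q. \<Sum>v\<in>T. c v * ((\<Prod>k<N. L k (a k) (i k) (x k) (u k)) * V v i u))"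
      using True by (simp add: compose_def e sum_distrib_left sum_distrib_right mult_ac)
    also have "\<dots> = (\<Sum>i \<in> Pi\<^sub>E {..<N} I. \<Sum>v\<in>T. \<Sum>u \<in> Pi\<^sub>E {..<N} Q. c v * ((\<Prod>k<N. L k (a k) (i k) (x k) (u k)) * V v i u))"
      by (intro sum.cong refl sum.swap)
    also have "\<dots> = (\<Sum>v\<in>T. \<Sum>i \<in> Pi\<^sub>E {..<N} I. \<Sum>u \<in> Pi\<^sub>E {..<N} Q. c v * ((\<Prod>k<N. L k (a k) (i k) (x k) (u k)) * V v i u))"
      by (rule sum.swap)
    also have "\<dots> = (\<Sum>v\<in>T. c v *\<^sub>R compose N A X I Q L (V v)) a x"
      unfolding sum_fun_apply[OF assms] scaleR_fun_def using True
      by (simp add: compose_def sum_distrib_left)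
    finally show ?thesis .
  next
    case False
    have z: "compose N A X I Q L W a x = 0" for W unfolding compose_def by (simp only: if_not_P[OF False])
    show ?thesis unfolding sum_fun_apply[OF assms] scaleR_fun_def by (simp add: z)
  qed
qed

lemma sum_ind_pair:
  assumes "finite S" "finite T" "z \<in> S \<times> T"
  shows "(\<Sum>(x, v)\<in>S \<times> T. if z = (x, v) then 1 else (0::real)) = 1"
proof -
  have "(\<Sum>(x, v)\<in>S \<times> T. if z = (x, v) then 1 else (0::real)) = (\<Sum>p\<in>S \<times> T. if z = p then 1 else 0)"
    by (intro sum.cong) auto
  also have "\<dots> = 1" using assms by (subst sum.delta') auto
  finally show ?thesis .
qed

lemma if_Nats: "(x::real) \<in> \<nat> \<Longrightarrow> (if b then x else 0) \<in> \<nat>" by simp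
lemma ind_Nats: "(if b then 1 else 0) \<in> (\<nat>::real set)" by simp

lemma det_elem:
  fixes A :: "nat \<Rightarrow> 'a set" and X :: "nat \<Rightarrow> 'x set"
  assumes fin: "\<forall>k<N. finite (A k) \<and> finite (X k)" and finIQ: "\<forall>k<N. finite (I k) \<and> finite (Q k)"
   and pf: "process_function N I Q \<omega>"
   and g: "\<forall>k<N. \<forall>a\<in>A k. \<forall>i\<in>I k. g k a i \<in> X k \<times> Q k"
  shows "compose N A X I Q (\<lambda>k a i x v. if g k a i = (x, v) then 1 else 0) (delta_process N Q \<omega>)
           \<in> DC N A X \<inter> {p. deterministic_correlation N A X p}"
proof -
  define Lg where "Lg = (\<lambda>k a i x v. if g k a i = (x, v) then 1 else (0::real))"
  have om: "\<omega> \<in> Pi\<^sub>E {..<N} Q \<rightarrow> Pi\<^sub>E {..<N} I" and cp: "classical_process N I Q (delta_process N Q \<omega>)"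
    using pf unfolding process_function_def by auto
  have li: "\<forall>k<N. local_intervention (A k) (I k) (X k) (Q k) (Lg k)"
  proof (intro allI impI)
    fix k assume k: "k < N"
    show "local_intervention (A k) (I k) (X k) (Q k) (Lg k)"
      unfolding local_intervention_def
    proof (intro ballI)
      fix a i assume a: "a \<in> A k" and i: "i \<in> I k"
      have "(\<Sum>(x, u)\<in>X k \<times> Q k. Lg k a i x u) = 1"
        unfolding Lg_def using fin finIQ k g a i by (intro sum_ind_pair) auto
      then show "(\<forall>x\<in>X k. \<forall>u\<in>Q k. 0 \<le> Lg k a i x u) \<and> (\<Sum>(x, u)\<in>X k \<times> Q k. Lg k a i x u) = 1"
        by (auto simp: Lg_def)
    qed
  qed
  have corr: "is_correlation N A X (compose N A X I Q Lg (delta_process N Q \<omega>))"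
    by (rule transfer[OF cp fin li])
  have inDC: "compose N A X I Q Lg (delta_process N Q \<omega>) \<in> DC N A X"
    unfolding DC_def det_extrema_polytope_def mem_Collect_eq
    apply (rule conjI[OF corr])
    apply (rule exI[of _ I], rule exI[of _ Q], rule exI[of _ Lg], rule exI[of _ "delta_process N Q \<omega>"])
    using finIQ li apply (intro conjI)
       apply blast
      apply blast
     apply (rule hull_inc) using pf apply blast
    by (rule refl)
  have finX: "finite (Pi\<^sub>E {..<N} X)" using fin by (intro finite_PiE) auto
  have nat: "\<forall>a x. compose N A X I Q Lg (delta_process N Q \<omega>) a x \<in> \<nat>"
    unfolding compose_def Lg_def delta_process_def
    by (intro allI if_Nats sum_Nats prod_Nats Nats_mult ind_Nats)
  have "deterministic_correlation N A X (compose N A X I Q Lg (delta_process N Q \<omega>))"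
    by (rule nat_det[OF corr nat finX])
  with inDC show ?thesis unfolding Lg_def by simp
qed



lemma decomp:
  fixes A :: "nat \<Rightarrow> 'a set" and X :: "nat \<Rightarrow> 'x set"
  assumes fin: "\<forall>k<N. finite (A k) \<and> finite (X k)" and finIQ: "\<forall>k<N. finite (I k) \<and> finite (Q k)"
   and pf: "process_function N I Q \<omega>"
   and li: "\<forall>k<N. local_intervention (A k) (I k) (X k) (Q k) (L k)"
  shows "compose N A X I Q L (delta_process N Q \<omega>) \<in> convex hull (DC N A X \<inter> {p. deterministic_correlation N A X p})"
proof -
  define G where "G k = Pi\<^sub>E (A k \<times> I k) (\<lambda>_. X k \<times> Q k)" for k
  define h where "h k s t = L k (fst s) (snd s) (fst t) (snd t)" for k and s :: "'a \<times> nat" and t :: "'x \<times> nat"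
  define \<mu> where "\<mu> k g = (\<Prod>s\<in>A k \<times> I k. h k s (g s))" for k g
  define D where "D \<gamma> = compose N A X I Q (\<lambda>k a i x v. if (\<lambda>k a i. \<gamma> k (a, i)) k a i = (x, v) then 1 else 0) (delta_process N Q \<omega>)" for \<gamma>
  have om: "\<omega> \<in> Pi\<^sub>E {..<N} Q \<rightarrow> Pi\<^sub>E {..<N} I"
    using pf unfolding process_function_def by auto
  have finI: "\<forall>k<N. finite (I k)" using finIQ by auto
  have finG: "finite (Pi\<^sub>E {..<N} G)"
    unfolding G_def using fin finIQ by (intro finite_PiE) auto
  have h1: "\<forall>s\<in>A k \<times> I k. sum (h k s) (X k \<times> Q k) = 1" if k: "k < N" for k
  proof
    fix s assume s: "s \<in> A k \<times> I k"
    have "sum (h k s) (X k \<times> Q k) = (\<Sum>(x, u)\<in>X k \<times> Q k. L k (fst s) (snd s) x u)"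
      unfolding h_def by (intro sum.cong) auto
    also have "\<dots> = 1" using li k s unfolding local_intervention_def by auto
    finally show "sum (h k s) (X k \<times> Q k) = 1" .
  qed
  have hnn: "0 \<le> h k s t" if "k < N" "s \<in> A k \<times> I k" "t \<in> X k \<times> Q k" for k s t
    using li that unfolding local_intervention_def h_def by auto
  have w1: "(\<Sum>\<gamma>\<in>Pi\<^sub>E {..<N} G. \<Prod>k<N. \<mu> k (\<gamma> k)) = 1"
  proof -
    have "(\<Sum>\<gamma>\<in>Pi\<^sub>E {..<N} G. \<Prod>k<N. \<mu> k (\<gamma> k)) = (\<Prod>k<N. \<Sum>g\<in>G k. \<mu> k g)"
      using finG fin finIQ unfolding G_def by (subst prod_sum_PiE) (auto intro!: finite_PiE)
    also have "\<dots> = (\<Prod>k<N. \<Prod>s\<in>A k \<times> I k. \<Sum>t\<in>X k \<times> Q k. h k s t)"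
      unfolding \<mu>_def G_def using fin finIQ by (intro prod.cong refl, subst prod_sum_PiE) auto
    also have "\<dots> = 1" by (rule prod.neutral, rule ballI, rule prod.neutral) (use h1 in blast)
    finally show ?thesis .
  qed
  have wnn: "0 \<le> (\<Prod>k<N. \<mu> k (\<gamma> k))" if "\<gamma> \<in> Pi\<^sub>E {..<N} G" for \<gamma>
    unfolding \<mu>_def
  proof (intro prod_nonneg ballI)
    fix k s assume k: "k \<in> {..<N}" and s: "s \<in> A k \<times> I k"
    have "\<gamma> k s \<in> X k \<times> Q k" using that k s unfolding G_def by (auto simp: PiE_iff)
    then show "0 \<le> h k s (\<gamma> k s)" using hnn k s by simp
  qed
  have mem: "D \<gamma> \<in> DC N A X \<inter> {p. deterministic_correlation N A X p}" if "\<gamma> \<in> Pi\<^sub>E {..<N} G" for \<gamma>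
    unfolding D_def
  proof (intro det_elem[OF fin finIQ pf] allI impI ballI)
    fix k a i assume k: "k < N" and a: "a \<in> A k" and i: "i \<in> I k"
    have "\<gamma> k (a, i) \<in> X k \<times> Q k" using that k a i unfolding G_def by (auto simp: PiE_iff)
    then show "(\<lambda>k a i. \<gamma> k (a, i)) k a i \<in> X k \<times> Q k" by simp
  qed
  have eq: "compose N A X I Q L (delta_process N Q \<omega>) = (\<Sum>\<gamma>\<in>Pi\<^sub>E {..<N} G. (\<Prod>k<N. \<mu> k (\<gamma> k)) *\<^sub>R D \<gamma>)"
  proof (intro ext)
    fix a x
    show "compose N A X I Q L (delta_process N Q \<omega>) a x = (\<Sum>\<gamma>\<in>Pi\<^sub>E {..<N} G. (\<Prod>k<N. \<mu> k (\<gamma> k)) *\<^sub>R D \<gamma>) a x"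
    proof (cases "a \<in> Pi\<^sub>E {..<N} A \<and> x \<in> Pi\<^sub>E {..<N} X")
      case True
      have "(\<Sum>\<gamma>\<in>Pi\<^sub>E {..<N} G. (\<Prod>k<N. \<mu> k (\<gamma> k)) *\<^sub>R D \<gamma>) a x
          = (\<Sum>\<gamma>\<in>Pi\<^sub>E {..<N} G. (\<Prod>k<N. \<mu> k (\<gamma> k)) * (\<Sum>u\<in>Pi\<^sub>E {..<N} Q. \<Prod>k<N. (if \<gamma> k (a k, \<omega> u k) = (x k, u k) then 1 else 0)))"
        unfolding sum_fun_apply[OF finG] scaleR_fun_def D_def compose_delta[OF om finI] using True by simp
      also have "\<dots> = (\<Sum>u\<in>Pi\<^sub>E {..<N} Q. \<Sum>\<gamma>\<in>Pi\<^sub>E {..<N} G. \<Prod>k<N. \<mu> k (\<gamma> k) * (if \<gamma> k (a k, \<omega> u k) = (x k, u k) then 1 else 0))"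
        by (simp add: sum_distrib_left prod.distrib sum.swap[of _ "Pi\<^sub>E {..<N} G"])
      also have "\<dots> = (\<Sum>u\<in>Pi\<^sub>E {..<N} Q. \<Prod>k<N. \<Sum>g\<in>G k. \<mu> k g * (if g (a k, \<omega> u k) = (x k, u k) then 1 else 0))"
        using fin finIQ unfolding G_def by (intro sum.cong refl, subst prod_sum_PiE) (auto intro!: finite_PiE)
      also have "\<dots> = (\<Sum>u\<in>Pi\<^sub>E {..<N} Q. \<Prod>k<N. L k (a k) (\<omega> u k) (x k) (u k))"
      proof (intro sum.cong refl prod.cong)
        fix u k assume u: "u \<in> Pi\<^sub>E {..<N} Q" and k: "k \<in> {..<N}"
        have wk: "\<omega> u k \<in> I k" using om u k by auto
        have "(\<Sum>g\<in>G k. \<mu> k g * (if g (a k, \<omega> u k) = (x k, u k) then 1 else 0)) = h k (a k, \<omega> u k) (x k, u k)"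
          unfolding G_def \<mu>_def
          by (rule pp) (use fin finIQ k True u wk h1[of k] in auto)
        then show "(\<Sum>g\<in>G k. \<mu> k g * (if g (a k, \<omega> u k) = (x k, u k) then 1 else 0)) = L k (a k) (\<omega> u k) (x k) (u k)"
          by (simp add: h_def)
      qed
      also have "\<dots> = compose N A X I Q L (delta_process N Q \<omega>) a x"
        using True by (simp add: compose_delta[OF om finI])
      finally show ?thesis by simp
    next
      case False
      have z: "compose N A X I Q L' W a x = 0" for L' W unfolding compose_def by (simp only: if_not_P[OF False])
      show ?thesis unfolding sum_fun_apply[OF finG] scaleR_fun_def D_def by (simp add: z)
    qed
  qed
  show ?thesis unfolding eq
    by (rule convex_sum[OF finG convex_convex_hull w1]) (use wnn mem in \<open>auto intro: hull_inc\<close>)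
qed

lemma DC_sub:
  fixes A :: "nat \<Rightarrow> 'a set" and X :: "nat \<Rightarrow> 'x set"
  assumes fin: "\<forall>k<N. finite (A k) \<and> finite (X k)"
  shows "DC N A X \<subseteq> convex hull (DC N A X \<inter> {p. deterministic_correlation N A X p})"
proof
  fix p assume "p \<in> DC N A X"
  then obtain I Q L P where finIQ: "\<forall>k<N. finite (I k) \<and> finite (Q k)"
    and li: "\<forall>k<N. local_intervention (A k) (I k) (X k) (Q k) (L k)"
    and P: "P \<in> det_extrema_polytope N I Q" and p: "p = compose N A X I Q L P"
    unfolding DC_def by blast
  obtain T c where T: "finite T" "T \<subseteq> {delta_process N Q \<omega> | \<omega>. process_function N I Q \<omega>}"
    and c: "\<forall>v\<in>T. 0 \<le> c v" "sum c T = 1" and Pe: "(\<Sum>v\<in>T. c v *\<^sub>R v) = P"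
    using P unfolding det_extrema_polytope_def convex_hull_explicit by blast
  have "p = (\<Sum>v\<in>T. c v *\<^sub>R compose N A X I Q L v)"
    unfolding p Pe[symmetric] using compose_sum[OF T(1), of N A X I Q L c "\<lambda>v. v"] by simp
  also have "\<dots> \<in> convex hull (DC N A X \<inter> {p. deterministic_correlation N A X p})"
  proof (rule convex_sum[OF T(1) convex_convex_hull c(2)])
    show "\<And>i. i \<in> T \<Longrightarrow> 0 \<le> c i" using c by blast
    fix v assume "v \<in> T"
    then obtain \<omega> where v: "v = delta_process N Q \<omega>" and pf: "process_function N I Q \<omega>" using T by blast
    show "compose N A X I Q L v \<in> convex hull (DC N A X \<inter> {p. deterministic_correlation N A X p})"
      unfolding v by (rule decomp[OF fin finIQ pf li])
  qed
  finally show "p \<in> convex hull (DC N A X \<inter> {p. deterministic_correlation N A X p})" .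
qed

lemma fiber_PiE:
  assumes w: "w \<in> Pi\<^sub>E {..<N} Q0"
  shows "{u \<in> Pi\<^sub>E {..<N} Q. restrict (\<lambda>k. \<pi> k (u k)) {..<N} = w} = Pi\<^sub>E {..<N} (\<lambda>k. {v \<in> Q k. \<pi> k v = w k})"
proof (intro set_eqI iffI)
  fix u assume "u \<in> {u \<in> Pi\<^sub>E {..<N} Q. restrict (\<lambda>k. \<pi> k (u k)) {..<N} = w}"
  then have u: "u \<in> Pi\<^sub>E {..<N} Q" and e: "restrict (\<lambda>k. \<pi> k (u k)) {..<N} = w" by auto
  have "\<pi> k (u k) = w k" if "k < N" for k using fun_cong[OF e, of k] that by simp
  then show "u \<in> Pi\<^sub>E {..<N} (\<lambda>k. {v \<in> Q k. \<pi> k v = w k})" using u by (auto simp: PiE_iff)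
next
  fix u assume u: "u \<in> Pi\<^sub>E {..<N} (\<lambda>k. {v \<in> Q k. \<pi> k v = w k})"
  have "restrict (\<lambda>k. \<pi> k (u k)) {..<N} = w"
  proof
    fix k show "restrict (\<lambda>k. \<pi> k (u k)) {..<N} k = w k"
      using u w by (cases "k < N") (auto simp: PiE_iff extensional_def)
  qed
  then show "u \<in> {u \<in> Pi\<^sub>E {..<N} Q. restrict (\<lambda>k. \<pi> k (u k)) {..<N} = w}"
    using u by (auto simp: PiE_iff)
qed

lemma relabel:
  assumes pf0: "process_function N I0 Q0 \<omega>0"
   and finIQ: "\<forall>k<N. finite (I k) \<and> finite (Q k)"
   and pi: "\<forall>k<N. \<forall>v\<in>Q k. \<pi> k v \<in> Q0 k"
   and tau: "\<forall>k<N. \<forall>n\<in>I0 k. \<tau> k n \<in> I k"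
  shows "process_function N I Q (\<lambda>u. restrict (\<lambda>k. \<tau> k (\<omega>0 (restrict (\<lambda>k. \<pi> k (u k)) {..<N}) k)) {..<N})"
proof -
  define pu where "pu u = restrict (\<lambda>k. \<pi> k (u k)) {..<N}" for u :: "nat \<Rightarrow> nat"
  define \<omega> where "\<omega> u = restrict (\<lambda>k. \<tau> k (\<omega>0 (pu u) k)) {..<N}" for u
  have om0: "\<omega>0 \<in> Pi\<^sub>E {..<N} Q0 \<rightarrow> Pi\<^sub>E {..<N} I0" and cp0: "classical_process N I0 Q0 (delta_process N Q0 \<omega>0)"
    using pf0 unfolding process_function_def by auto
  have finIQ0: "\<forall>k<N. finite (I0 k) \<and> finite (Q0 k)"
   and cl0: "\<And>(A' :: nat \<Rightarrow> nat set) (X' :: nat \<Rightarrow> nat set) L.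
        (\<forall>k<N. finite (A' k) \<and> finite (X' k)) \<Longrightarrow>
        (\<forall>k<N. local_intervention (A' k) (I0 k) (X' k) (Q0 k) (L k)) \<Longrightarrow>
        is_correlation N A' X' (compose N A' X' I0 Q0 L (delta_process N Q0 \<omega>0))"
    using cp0 unfolding classical_process_def by blast+
  have pu_in: "pu u \<in> Pi\<^sub>E {..<N} Q0" if "u \<in> Pi\<^sub>E {..<N} Q" for u
    using that pi unfolding pu_def by (auto simp: PiE_iff)
  have om: "\<omega> \<in> Pi\<^sub>E {..<N} Q \<rightarrow> Pi\<^sub>E {..<N} I"
  proof
    fix u assume u: "u \<in> Pi\<^sub>E {..<N} Q"
    have "\<omega>0 (pu u) \<in> Pi\<^sub>E {..<N} I0" using om0 pu_in[OF u] by blast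
    then show "\<omega> u \<in> Pi\<^sub>E {..<N} I" using tau unfolding \<omega>_def by (auto simp: PiE_iff)
  qed
  have finI: "\<forall>k<N. finite (I k)" and finI0: "\<forall>k<N. finite (I0 k)" using finIQ finIQ0 by auto
  have "classical_process N I Q (delta_process N Q \<omega>)"
    unfolding classical_process_def
  proof (intro conjI)
    show "\<forall>k<N. finite (I k) \<and> finite (Q k)" by (rule finIQ)
    show "cond_dist_process N I Q (delta_process N Q \<omega>)" by (rule cond_dist_delta[OF om finI])
    show "\<forall>(A' :: nat \<Rightarrow> nat set) (X' :: nat \<Rightarrow> nat set) L'.
        (\<forall>k<N. finite (A' k) \<and> finite (X' k)) \<longrightarrow>
        (\<forall>k<N. local_intervention (A' k) (I k) (X' k) (Q k) (L' k)) \<longrightarrow>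
        is_correlation N A' X' (compose N A' X' I Q L' (delta_process N Q \<omega>))"
    proof (intro allI impI)
    fix A' X' :: "nat \<Rightarrow> nat set" and L'
    assume finAX: "\<forall>k<N. finite (A' k) \<and> finite (X' k)"
      and li: "\<forall>k<N. local_intervention (A' k) (I k) (X' k) (Q k) (L' k)"
    define L'' where "L'' k a i0 x w = (\<Sum>v\<in>{v \<in> Q k. \<pi> k v = w}. L' k a (\<tau> k i0) x v)" for k a i0 x w
    have li'': "\<forall>k<N. local_intervention (A' k) (I0 k) (X' k) (Q0 k) (L'' k)"
    proof (intro allI impI)
      fix k assume k: "k < N"
      show "local_intervention (A' k) (I0 k) (X' k) (Q0 k) (L'' k)"
        unfolding local_intervention_def
      proof (intro ballI)
        fix a i0 assume a: "a \<in> A' k" and i0: "i0 \<in> I0 k"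
        have ti: "\<tau> k i0 \<in> I k" using tau k i0 by blast
        have L1: "\<forall>x\<in>X' k. \<forall>u\<in>Q k. 0 \<le> L' k a (\<tau> k i0) x u"
          and L2: "(\<Sum>(x, u)\<in>X' k \<times> Q k. L' k a (\<tau> k i0) x u) = 1"
          using li k a ti unfolding local_intervention_def by blast+
        have nn: "\<forall>x\<in>X' k. \<forall>u\<in>Q0 k. 0 \<le> L'' k a i0 x u"
          unfolding L''_def using L1 by (auto intro!: sum_nonneg)
        have "(\<Sum>(x, w)\<in>X' k \<times> Q0 k. L'' k a i0 x w) = (\<Sum>x\<in>X' k. \<Sum>w\<in>Q0 k. L'' k a i0 x w)"
          by (simp add: sum.cartesian_product)
        also have "\<dots> = (\<Sum>x\<in>X' k. \<Sum>v\<in>Q k. L' k a (\<tau> k i0) x v)"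
          unfolding L''_def using finIQ finIQ0 k pi by (intro sum.cong refl sum.group) auto
        also have "\<dots> = 1" using L2 by (simp add: sum.cartesian_product)
        finally show "(\<forall>x\<in>X' k. \<forall>u\<in>Q0 k. 0 \<le> L'' k a i0 x u) \<and> (\<Sum>(x, w)\<in>X' k \<times> Q0 k. L'' k a i0 x w) = 1"
          using nn by blast
      qed
    qed
    have eq: "compose N A' X' I Q L' (delta_process N Q \<omega>) = compose N A' X' I0 Q0 L'' (delta_process N Q0 \<omega>0)"
    proof (intro ext)
      fix a x
      show "compose N A' X' I Q L' (delta_process N Q \<omega>) a x = compose N A' X' I0 Q0 L'' (delta_process N Q0 \<omega>0) a x"
      proof -
        have "(\<Sum>u\<in>Pi\<^sub>E {..<N} Q. \<Prod>k<N. L' k (a k) (\<omega> u k) (x k) (u k))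
            = (\<Sum>u\<in>Pi\<^sub>E {..<N} Q. \<Prod>k<N. L' k (a k) (\<tau> k (\<omega>0 (pu u) k)) (x k) (u k))"
          unfolding \<omega>_def by (intro sum.cong refl prod.cong) auto
        also have "\<dots> = (\<Sum>w\<in>Pi\<^sub>E {..<N} Q0. \<Sum>u\<in>{u \<in> Pi\<^sub>E {..<N} Q. pu u = w}. \<Prod>k<N. L' k (a k) (\<tau> k (\<omega>0 (pu u) k)) (x k) (u k))"
          using finIQ finIQ0 pu_in by (intro sum.group[symmetric] finite_PiE) auto
        also have "\<dots> = (\<Sum>w\<in>Pi\<^sub>E {..<N} Q0. \<Sum>u\<in>Pi\<^sub>E {..<N} (\<lambda>k. {v \<in> Q k. \<pi> k v = w k}). \<Prod>k<N. L' k (a k) (\<tau> k (\<omega>0 w k)) (x k) (u k))"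
        proof (intro sum.cong refl)
          fix w u assume w: "w \<in> Pi\<^sub>E {..<N} Q0"
          show "{u \<in> Pi\<^sub>E {..<N} Q. pu u = w} = Pi\<^sub>E {..<N} (\<lambda>k. {v \<in> Q k. \<pi> k v = w k})"
            unfolding pu_def by (rule fiber_PiE[OF w])
          assume "u \<in> Pi\<^sub>E {..<N} (\<lambda>k. {v \<in> Q k. \<pi> k v = w k})"
          then have "pu u = w" using fiber_PiE[OF w, of Q \<pi>] unfolding pu_def by blast
          then show "(\<Prod>k<N. L' k (a k) (\<tau> k (\<omega>0 (pu u) k)) (x k) (u k)) = (\<Prod>k<N. L' k (a k) (\<tau> k (\<omega>0 w k)) (x k) (u k))"
            by simp
        qed
        also have "\<dots> = (\<Sum>w\<in>Pi\<^sub>E {..<N} Q0. \<Prod>k<N. L'' k (a k) (\<omega>0 w k) (x k) (w k))"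
          unfolding L''_def using finIQ by (intro sum.cong refl, subst prod_sum_PiE) auto
        finally have "(\<Sum>u\<in>Pi\<^sub>E {..<N} Q. \<Prod>k<N. L' k (a k) (\<omega> u k) (x k) (u k))
            = (\<Sum>w\<in>Pi\<^sub>E {..<N} Q0. \<Prod>k<N. L'' k (a k) (\<omega>0 w k) (x k) (w k))" .
        then show ?thesis by (simp only: compose_delta[OF om finI] compose_delta[OF om0 finI0])
      qed
    qed
    show "is_correlation N A' X' (compose N A' X' I Q L' (delta_process N Q \<omega>))"
      unfolding eq by (rule cl0[OF finAX li''])
    qed
  qed
  then show ?thesis using om unfolding process_function_def \<omega>_def pu_def by simp
qed



definition tagv :: "nat \<Rightarrow> nat \<Rightarrow> (nat \<Rightarrow> nat) \<Rightarrow> nat \<Rightarrow> nat" where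
  "tagv N b j = restrict (\<lambda>k. 2 * j k + b) {..<N}"

lemma tag_PiE:
  assumes hS: "\<forall>k<N. {i \<in> S k. i mod 2 = b} = (\<lambda>n. 2*n+b) ` Sb k" and b: "b < 2"
  shows "{i \<in> Pi\<^sub>E {..<N} S. \<forall>k<N. i k mod 2 = b} = tagv N b ` Pi\<^sub>E {..<N} Sb"
    and "inj_on (tagv N b) (Pi\<^sub>E {..<N} Sb)"
    and "\<And>j. j \<in> Pi\<^sub>E {..<N} Sb \<Longrightarrow> restrict (\<lambda>k. tagv N b j k div 2) {..<N} = j"
    and "\<And>j. j \<in> Pi\<^sub>E {..<N} Sb \<Longrightarrow> tagv N b j \<in> Pi\<^sub>E {..<N} S"
proof -
  have mem: "2 * n + b \<in> S k" if "k < N" "n \<in> Sb k" for k n using hS that by blast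
  have dv: "(2 * n + b) div 2 = n" for n using b by simp
  have md: "(2 * n + b) mod 2 = b" for n using b by simp
  show inS: "tagv N b j \<in> Pi\<^sub>E {..<N} S" if "j \<in> Pi\<^sub>E {..<N} Sb" for j
    using that mem unfolding tagv_def by (auto simp: PiE_iff)
  show bk: "restrict (\<lambda>k. tagv N b j k div 2) {..<N} = j" if j: "j \<in> Pi\<^sub>E {..<N} Sb" for j
  proof
    fix k show "restrict (\<lambda>k. tagv N b j k div 2) {..<N} k = j k"
      using j dv by (cases "k < N") (auto simp: tagv_def PiE_iff extensional_def)
  qed
  show "inj_on (tagv N b) (Pi\<^sub>E {..<N} Sb)"
  proof (rule inj_onI)
    fix j j' assume j: "j \<in> Pi\<^sub>E {..<N} Sb" and j': "j' \<in> Pi\<^sub>E {..<N} Sb" and e: "tagv N b j = tagv N b j'"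
    have "restrict (\<lambda>k. tagv N b j k div 2) {..<N} = restrict (\<lambda>k. tagv N b j' k div 2) {..<N}"
      using e by simp
    then show "j = j'" using bk[OF j] bk[OF j'] by simp
  qed
  show "{i \<in> Pi\<^sub>E {..<N} S. \<forall>k<N. i k mod 2 = b} = tagv N b ` Pi\<^sub>E {..<N} Sb"
  proof (intro set_eqI iffI)
    fix i assume "i \<in> {i \<in> Pi\<^sub>E {..<N} S. \<forall>k<N. i k mod 2 = b}"
    then have i: "i \<in> Pi\<^sub>E {..<N} S" and t: "\<forall>k<N. i k mod 2 = b" by auto
    define j where "j = restrict (\<lambda>k. i k div 2) {..<N}"
    have ik: "i k = 2 * (i k div 2) + b" if "k < N" for k using t that by (metis div_mult_mod_eq mult.commute)
    have jS: "j \<in> Pi\<^sub>E {..<N} Sb"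
    proof -
      have "i k div 2 \<in> Sb k" if k: "k < N" for k
      proof -
        have "i k \<in> {i \<in> S k. i mod 2 = b}" using i t k by (auto simp: PiE_iff)
        then obtain n where n: "n \<in> Sb k" "i k = 2 * n + b" using hS k by blast
        then show ?thesis using dv by simp
      qed
      then show ?thesis unfolding j_def by (auto simp: PiE_iff)
    qed
    have "tagv N b j = i"
    proof
      fix k show "tagv N b j k = i k"
        using i ik by (cases "k < N") (auto simp: tagv_def j_def PiE_iff extensional_def)
    qed
    then show "i \<in> tagv N b ` Pi\<^sub>E {..<N} Sb" using jS by blast
  next
    fix i assume "i \<in> tagv N b ` Pi\<^sub>E {..<N} Sb"
    then obtain j where j: "j \<in> Pi\<^sub>E {..<N} Sb" and i: "i = tagv N b j" by blast
    show "i \<in> {i \<in> Pi\<^sub>E {..<N} S. \<forall>k<N. i k mod 2 = b}"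
      using inS[OF j] md unfolding i by (auto simp: tagv_def)
  qed
qed

definition liftP :: "nat \<Rightarrow> (nat \<Rightarrow> nat set) \<Rightarrow> (nat \<Rightarrow> nat set) \<Rightarrow> nat \<Rightarrow> (nat \<Rightarrow> nat)
    \<Rightarrow> ((nat \<Rightarrow> nat) \<Rightarrow> (nat \<Rightarrow> nat) \<Rightarrow> real) \<Rightarrow> (nat \<Rightarrow> nat) \<Rightarrow> (nat \<Rightarrow> nat) \<Rightarrow> real" where
  "liftP N I Q b d P = (\<lambda>i u. if u \<in> Pi\<^sub>E {..<N} Q \<and> i \<in> Pi\<^sub>E {..<N} I \<and> (\<forall>k<N. i k mod 2 = b)
      then P (restrict (\<lambda>k. i k div 2) {..<N}) (restrict (\<lambda>k. if u k mod 2 = b then u k div 2 else d k) {..<N})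
      else 0)"

lemma compose_lift:
  assumes hI: "\<forall>k<N. {i \<in> I k. i mod 2 = b} = (\<lambda>n. 2*n+b) ` Ib k"
    and hQ: "\<forall>k<N. {i \<in> Q k. i mod 2 = b} = (\<lambda>n. 2*n+b) ` Qb k" and b: "b < 2"
    and hL: "\<forall>k a i x v. i mod 2 = b \<longrightarrow> L k a i x v = (if v mod 2 = b then Lb k a (i div 2) x (v div 2) else 0)"
    and finIQ: "\<forall>k<N. finite (I k) \<and> finite (Q k)"
  shows "compose N A X I Q L (liftP N I Q b d P) = compose N A X Ib Qb Lb P"
proof (intro ext)
  fix a x
  show "compose N A X I Q L (liftP N I Q b d P) a x = compose N A X Ib Qb Lb P a x"
  proof (cases "a \<in> Pi\<^sub>E {..<N} A \<and> x \<in> Pi\<^sub>E {..<N} X")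
    case False
    have z: "compose N A X I' Q' L' W a x = 0" for I' Q' L' W unfolding compose_def by (simp only: if_not_P[OF False])
    show ?thesis by (simp only: z)
  next
    case True
    define F where "F i u = (\<Prod>k<N. L k (a k) (i k) (x k) (u k)) * liftP N I Q b d P i u" for i u
    have finPI: "finite (Pi\<^sub>E {..<N} I)" and finPQ: "finite (Pi\<^sub>E {..<N} Q)"
      using finIQ by (auto intro!: finite_PiE)
    note tI = tag_PiE[OF hI b] and tQ = tag_PiE[OF hQ b]
    have md: "(2 * n + b) mod 2 = b" and dv: "(2 * n + b) div 2 = n" for n using b by auto
    have "(\<Sum>i\<in>Pi\<^sub>E {..<N} I. \<Sum>u\<in>Pi\<^sub>E {..<N} Q. F i u)
        = (\<Sum>i\<in>{i \<in> Pi\<^sub>E {..<N} I. \<forall>k<N. i k mod 2 = b}. \<Sum>u\<in>Pi\<^sub>E {..<N} Q. F i u)"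
    proof (rule sum.mono_neutral_right[OF finPI])
      show "{i \<in> Pi\<^sub>E {..<N} I. \<forall>k<N. i k mod 2 = b} \<subseteq> Pi\<^sub>E {..<N} I" by blast
      show "\<forall>i\<in>Pi\<^sub>E {..<N} I - {i \<in> Pi\<^sub>E {..<N} I. \<forall>k<N. i k mod 2 = b}. (\<Sum>u\<in>Pi\<^sub>E {..<N} Q. F i u) = 0"
      proof
        fix i assume "i \<in> Pi\<^sub>E {..<N} I - {i \<in> Pi\<^sub>E {..<N} I. \<forall>k<N. i k mod 2 = b}"
        then have nb: "\<not> (\<forall>k<N. i k mod 2 = b)" by blast
        have "F i u = 0" for u
        proof -
          have nc: "\<not> (u \<in> Pi\<^sub>E {..<N} Q \<and> i \<in> Pi\<^sub>E {..<N} I \<and> (\<forall>k<N. i k mod 2 = b))" using nb by blast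
          show ?thesis unfolding F_def liftP_def by (simp only: if_not_P[OF nc] mult_zero_right)
        qed
        then show "(\<Sum>u\<in>Pi\<^sub>E {..<N} Q. F i u) = 0" by simp
      qed
    qed
    also have "\<dots> = (\<Sum>j\<in>Pi\<^sub>E {..<N} Ib. \<Sum>u\<in>Pi\<^sub>E {..<N} Q. F (tagv N b j) u)"
      unfolding tI(1) by (rule sum.reindex[OF tI(2), unfolded comp_def])
    also have "\<dots> = (\<Sum>j\<in>Pi\<^sub>E {..<N} Ib. \<Sum>u\<in>{u \<in> Pi\<^sub>E {..<N} Q. \<forall>k<N. u k mod 2 = b}. F (tagv N b j) u)"
    proof (rule sum.cong[OF refl])
      fix j assume j: "j \<in> Pi\<^sub>E {..<N} Ib"
      show "(\<Sum>u\<in>Pi\<^sub>E {..<N} Q. F (tagv N b j) u) = (\<Sum>u\<in>{u \<in> Pi\<^sub>E {..<N} Q. \<forall>k<N. u k mod 2 = b}. F (tagv N b j) u)"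
      proof (rule sum.mono_neutral_right[OF finPQ])
      show "{u \<in> Pi\<^sub>E {..<N} Q. \<forall>k<N. u k mod 2 = b} \<subseteq> Pi\<^sub>E {..<N} Q" by blast
      show "\<forall>u\<in>Pi\<^sub>E {..<N} Q - {u \<in> Pi\<^sub>E {..<N} Q. \<forall>k<N. u k mod 2 = b}. F (tagv N b j) u = 0"
      proof
        fix u assume "u \<in> Pi\<^sub>E {..<N} Q - {u \<in> Pi\<^sub>E {..<N} Q. \<forall>k<N. u k mod 2 = b}"
        then obtain k where k: "k < N" and uk: "u k mod 2 \<noteq> b" by auto
        have "L k (a k) (tagv N b j k) (x k) (u k) = 0"
          using hL k uk md unfolding tagv_def by simp
        then have "(\<Prod>k<N. L k (a k) (tagv N b j k) (x k) (u k)) = 0"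
          using k by (intro prod_zero) auto
        then show "F (tagv N b j) u = 0" unfolding F_def by simp
      qed
      qed
    qed
    also have "\<dots> = (\<Sum>j\<in>Pi\<^sub>E {..<N} Ib. \<Sum>w\<in>Pi\<^sub>E {..<N} Qb. F (tagv N b j) (tagv N b w))"
      unfolding tQ(1) by (intro sum.cong refl sum.reindex[OF tQ(2), unfolded comp_def])
    also have "\<dots> = (\<Sum>j\<in>Pi\<^sub>E {..<N} Ib. \<Sum>w\<in>Pi\<^sub>E {..<N} Qb. (\<Prod>k<N. Lb k (a k) (j k) (x k) (w k)) * P j w)"
    proof (intro sum.cong refl)
      fix j w assume j: "j \<in> Pi\<^sub>E {..<N} Ib" and w: "w \<in> Pi\<^sub>E {..<N} Qb"
      have p: "(\<Prod>k<N. L k (a k) (tagv N b j k) (x k) (tagv N b w k)) = (\<Prod>k<N. Lb k (a k) (j k) (x k) (w k))"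
        using hL md dv by (intro prod.cong refl) (simp add: tagv_def)
      have r: "restrict (\<lambda>k. if tagv N b w k mod 2 = b then tagv N b w k div 2 else d k) {..<N}
             = restrict (\<lambda>k. tagv N b w k div 2) {..<N}"
        using md by (intro restrict_ext) (simp add: tagv_def)
      have l: "liftP N I Q b d P (tagv N b j) (tagv N b w) = P j w"
      proof -
        have c: "tagv N b w \<in> Pi\<^sub>E {..<N} Q \<and> tagv N b j \<in> Pi\<^sub>E {..<N} I \<and> (\<forall>k<N. tagv N b j k mod 2 = b)"
          using tI(4)[OF j] tQ(4)[OF w] md by (simp add: tagv_def)
        show ?thesis unfolding liftP_def
          by (simp only: if_P[OF c] r tI(3)[OF j] tQ(3)[OF w])
      qed
      show "F (tagv N b j) (tagv N b w) = (\<Prod>k<N. Lb k (a k) (j k) (x k) (w k)) * P j w"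
        unfolding F_def p l ..
    qed
    finally show ?thesis using True unfolding compose_def F_def by simp
  qed
qed

lemma lift_delta:
  assumes hI: "\<forall>k<N. {i \<in> I k. i mod 2 = b} = (\<lambda>n. 2*n+b) ` Ib k"
    and hQ: "\<forall>k<N. {i \<in> Q k. i mod 2 = b} = (\<lambda>n. 2*n+b) ` Qb k" and b: "b < 2"
    and finIQ: "\<forall>k<N. finite (I k) \<and> finite (Q k)"
    and pfb: "process_function N Ib Qb \<omega>" and d: "\<forall>k<N. d k \<in> Qb k"
  shows "\<exists>\<omega>'. process_function N I Q \<omega>' \<and> liftP N I Q b d (delta_process N Qb \<omega>) = delta_process N Q \<omega>'"
proof -
  define pik where "pik k v = (if v mod 2 = b then v div 2 else d k)" for k v
  define pu where "pu u = restrict (\<lambda>k. pik k (u k)) {..<N}" for u :: "nat \<Rightarrow> nat"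
  define \<omega>' where "\<omega>' u = restrict (\<lambda>k. (\<lambda>k n. 2*n+b) k (\<omega> (restrict (\<lambda>k. pik k (u k)) {..<N}) k)) {..<N}" for u
  note tI = tag_PiE[OF hI b]
  have md: "(2 * n + b) mod 2 = b" and dv: "(2 * n + b) div 2 = n" for n using b by auto
  have pik: "\<forall>k<N. \<forall>v\<in>Q k. pik k v \<in> Qb k"
  proof (intro allI impI ballI)
    fix k v assume k: "k < N" and v: "v \<in> Q k"
    show "pik k v \<in> Qb k"
    proof (cases "v mod 2 = b")
      case True
      then have "v \<in> {i \<in> Q k. i mod 2 = b}" using v by blast
      then obtain n where "n \<in> Qb k" "v = 2 * n + b" using hQ k by blast
      then show ?thesis using True dv unfolding pik_def by simp
    qed (use d k in \<open>simp add: pik_def\<close>)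
  qed
  have tau: "\<forall>k<N. \<forall>n\<in>Ib k. (\<lambda>k n. 2*n+b) k n \<in> I k" using hI by blast
  have pf': "process_function N I Q \<omega>'"
    unfolding \<omega>'_def by (rule relabel[OF pfb finIQ pik tau])
  have omb: "\<omega> \<in> Pi\<^sub>E {..<N} Qb \<rightarrow> Pi\<^sub>E {..<N} Ib" using pfb unfolding process_function_def by auto
  have eq: "liftP N I Q b d (delta_process N Qb \<omega>) i u = delta_process N Q \<omega>' i u" for i u
  proof (cases "u \<in> Pi\<^sub>E {..<N} Q")
    case False
    then show ?thesis unfolding liftP_def delta_process_def by simp
  next
    case True
    have puin: "pu u \<in> Pi\<^sub>E {..<N} Qb" using True pik unfolding pu_def by (auto simp: PiE_iff)
    have wq: "\<omega> (pu u) \<in> Pi\<^sub>E {..<N} Ib" using omb puin by blast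
    have o': "\<omega>' u = tagv N b (\<omega> (pu u))" unfolding \<omega>'_def tagv_def pu_def by simp
    have iff: "(i \<in> Pi\<^sub>E {..<N} I \<and> (\<forall>k<N. i k mod 2 = b) \<and> restrict (\<lambda>k. i k div 2) {..<N} = \<omega> (pu u))
        \<longleftrightarrow> i = tagv N b (\<omega> (pu u))"
    proof
      assume h: "i \<in> Pi\<^sub>E {..<N} I \<and> (\<forall>k<N. i k mod 2 = b) \<and> restrict (\<lambda>k. i k div 2) {..<N} = \<omega> (pu u)"
      then have "i \<in> tagv N b ` Pi\<^sub>E {..<N} Ib" using tI(1) by blast
      then obtain j where j: "j \<in> Pi\<^sub>E {..<N} Ib" and ij: "i = tagv N b j" by blast
      have "j = \<omega> (pu u)" using h tI(3)[OF j] ij by simp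
      then show "i = tagv N b (\<omega> (pu u))" using ij by simp
    next
      assume h: "i = tagv N b (\<omega> (pu u))"
      show "i \<in> Pi\<^sub>E {..<N} I \<and> (\<forall>k<N. i k mod 2 = b) \<and> restrict (\<lambda>k. i k div 2) {..<N} = \<omega> (pu u)"
        unfolding h using tI(4)[OF wq] tI(3)[OF wq] md by (simp add: tagv_def)
    qed
    have "liftP N I Q b d (delta_process N Qb \<omega>) i u
        = (if i \<in> Pi\<^sub>E {..<N} I \<and> (\<forall>k<N. i k mod 2 = b) \<and> restrict (\<lambda>k. i k div 2) {..<N} = \<omega> (pu u) then 1 else 0)"
      unfolding liftP_def delta_process_def using True puin unfolding pu_def pik_def by auto
    also have "\<dots> = delta_process N Q \<omega>' i u"
      unfolding iff delta_process_def o' using True by simp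
    finally show ?thesis .
  qed
  show ?thesis using pf' eq by blast
qed

lemma linear_liftP: "linear (liftP N I Q b d)"
  by (rule linearI) (auto simp: liftP_def fun_eq_iff plus_fun_def scaleR_fun_def)



lemma li_tag:
  fixes b :: nat
  assumes hQ: "{v \<in> Q. v mod 2 = b} = (\<lambda>n. 2*n+b) ` Qb" and b: "b < 2" and fQ: "finite Q"
    and hL: "\<forall>a i x v. i mod 2 = b \<longrightarrow> L a i x v = (if v mod 2 = b then Lb a (i div 2) x (v div 2) else 0)"
    and lib: "local_intervention A Ib X Qb Lb" and a: "a \<in> A" and ib: "i mod 2 = b" and i: "i div 2 \<in> Ib"
  shows "(\<forall>x\<in>X. \<forall>v\<in>Q. 0 \<le> L a i x v) \<and> (\<Sum>(x, v)\<in>X \<times> Q. L a i x v) = 1"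
proof -
  have dv: "(2 * n + b) div 2 = n" for n using b by simp
  have Lb1: "\<forall>x\<in>X. \<forall>u\<in>Qb. 0 \<le> Lb a (i div 2) x u" and Lb2: "(\<Sum>(x, u)\<in>X \<times> Qb. Lb a (i div 2) x u) = 1"
    using lib a i unfolding local_intervention_def by blast+
  have vin: "v div 2 \<in> Qb" if "v \<in> Q" "v mod 2 = b" for v
  proof -
    have "v \<in> {v \<in> Q. v mod 2 = b}" using that by blast
    then obtain n where "n \<in> Qb" "v = 2 * n + b" using hQ by blast
    then show ?thesis using dv by simp
  qed
  have nn: "\<forall>x\<in>X. \<forall>v\<in>Q. 0 \<le> L a i x v"
    using hL ib Lb1 vin by auto
  have inj: "inj_on (\<lambda>n. 2*n+b) Qb" by (rule inj_onI) simp
  have "(\<Sum>(x, v)\<in>X \<times> Q. L a i x v) = (\<Sum>x\<in>X. \<Sum>v\<in>Q. L a i x v)"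
    by (simp add: sum.cartesian_product)
  also have "\<dots> = (\<Sum>x\<in>X. \<Sum>v\<in>Q. if v mod 2 = b then Lb a (i div 2) x (v div 2) else 0)"
    using hL ib by simp
  also have "\<dots> = (\<Sum>x\<in>X. \<Sum>v\<in>{v \<in> Q. v mod 2 = b}. Lb a (i div 2) x (v div 2))"
    using fQ by (simp add: sum.inter_filter)
  also have "\<dots> = (\<Sum>x\<in>X. \<Sum>n\<in>Qb. Lb a (i div 2) x n)"
    unfolding hQ by (subst sum.reindex[OF inj]) (simp add: dv)
  also have "\<dots> = 1" using Lb2 by (simp add: sum.cartesian_product)
  finally show ?thesis using nn by blast
qed

lemma compose_lin2:
  "compose N A X I Q L (u *\<^sub>R P1 + v *\<^sub>R P2) = u *\<^sub>R compose N A X I Q L P1 + v *\<^sub>R compose N A X I Q L P2"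
proof (intro ext)
  fix a x
  show "compose N A X I Q L (u *\<^sub>R P1 + v *\<^sub>R P2) a x = (u *\<^sub>R compose N A X I Q L P1 + v *\<^sub>R compose N A X I Q L P2) a x"
  proof (cases "a \<in> Pi\<^sub>E {..<N} A \<and> x \<in> Pi\<^sub>E {..<N} X")
    case True
    then show ?thesis
      by (simp add: compose_def plus_fun_def scaleR_fun_def sum.distrib sum_distrib_left algebra_simps)
  next
    case False
    have z: "compose N A X I Q L W a x = 0" for W unfolding compose_def by (simp only: if_not_P[OF False])
    show ?thesis by (simp add: z plus_fun_def scaleR_fun_def)
  qed
qed

lemma corr_convex:
  assumes c1: "is_correlation N A X p1" and c2: "is_correlation N A X p2"
    and u: "0 \<le> u" and v: "0 \<le> v" and uv: "u + v = 1"
  shows "is_correlation N A X (u *\<^sub>R p1 + v *\<^sub>R p2)"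
  unfolding is_correlation_def
proof (intro conjI)
  have s1: "\<And>a x. p1 a x \<noteq> 0 \<Longrightarrow> a \<in> Pi\<^sub>E {..<N} A \<and> x \<in> Pi\<^sub>E {..<N} X"
   and n1: "\<And>a x. a \<in> Pi\<^sub>E {..<N} A \<Longrightarrow> x \<in> Pi\<^sub>E {..<N} X \<Longrightarrow> 0 \<le> p1 a x"
   and t1: "\<And>a. a \<in> Pi\<^sub>E {..<N} A \<Longrightarrow> (\<Sum>x \<in> Pi\<^sub>E {..<N} X. p1 a x) = 1"
    using c1 unfolding is_correlation_def by (meson, meson, meson)
  have s2: "\<And>a x. p2 a x \<noteq> 0 \<Longrightarrow> a \<in> Pi\<^sub>E {..<N} A \<and> x \<in> Pi\<^sub>E {..<N} X"
   and n2: "\<And>a x. a \<in> Pi\<^sub>E {..<N} A \<Longrightarrow> x \<in> Pi\<^sub>E {..<N} X \<Longrightarrow> 0 \<le> p2 a x"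
   and t2: "\<And>a. a \<in> Pi\<^sub>E {..<N} A \<Longrightarrow> (\<Sum>x \<in> Pi\<^sub>E {..<N} X. p2 a x) = 1"
    using c2 unfolding is_correlation_def by (meson, meson, meson)
  show "\<forall>a x. (u *\<^sub>R p1 + v *\<^sub>R p2) a x \<noteq> 0 \<longrightarrow> a \<in> Pi\<^sub>E {..<N} A \<and> x \<in> Pi\<^sub>E {..<N} X"
  proof (intro allI impI)
    fix a x assume "(u *\<^sub>R p1 + v *\<^sub>R p2) a x \<noteq> 0"
    then have "p1 a x \<noteq> 0 \<or> p2 a x \<noteq> 0" by (auto simp: plus_fun_def scaleR_fun_def)
    then show "a \<in> Pi\<^sub>E {..<N} A \<and> x \<in> Pi\<^sub>E {..<N} X" using s1 s2 by blast
  qed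
  show "\<forall>a\<in>Pi\<^sub>E {..<N} A. \<forall>x\<in>Pi\<^sub>E {..<N} X. 0 \<le> (u *\<^sub>R p1 + v *\<^sub>R p2) a x"
    using n1 n2 u v by (simp add: plus_fun_def scaleR_fun_def)
  show "\<forall>a\<in>Pi\<^sub>E {..<N} A. (\<Sum>x\<in>Pi\<^sub>E {..<N} X. (u *\<^sub>R p1 + v *\<^sub>R p2) a x) = 1"
    using t1 t2 uv by (simp add: plus_fun_def scaleR_fun_def sum.distrib sum_distrib_left[symmetric])
qed

lemma compose_emptyQ:
  assumes "Pi\<^sub>E {..<N} Q = {}"
  shows "compose N A X I Q L P = (\<lambda>a x. 0)"
  using assms by (simp add: compose_def fun_eq_iff)

definition mS :: "(nat \<Rightarrow> nat set) \<Rightarrow> (nat \<Rightarrow> nat set) \<Rightarrow> nat \<Rightarrow> nat set" where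
  "mS S1 S2 k = (\<lambda>n. 2*n) ` S1 k \<union> (\<lambda>n. 2*n+1) ` S2 k"

definition mL :: "(nat \<Rightarrow> 'a \<Rightarrow> nat \<Rightarrow> 'x \<Rightarrow> nat \<Rightarrow> real) \<Rightarrow> (nat \<Rightarrow> 'a \<Rightarrow> nat \<Rightarrow> 'x \<Rightarrow> nat \<Rightarrow> real)
    \<Rightarrow> nat \<Rightarrow> 'a \<Rightarrow> nat \<Rightarrow> 'x \<Rightarrow> nat \<Rightarrow> real" where
  "mL L1 L2 = (\<lambda>k a i x v. if i mod 2 = v mod 2 then
      (if i mod 2 = 0 then L1 k a (i div 2) x (v div 2) else L2 k a (i div 2) x (v div 2)) else 0)"

lemma mS0: "{i \<in> mS S1 S2 k. i mod 2 = 0} = (\<lambda>n. 2*n+0) ` S1 k"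
  unfolding mS_def by auto

lemma mS1: "{i \<in> mS S1 S2 k. i mod 2 = 1} = (\<lambda>n. 2*n+1) ` S2 k"
  unfolding mS_def by auto

lemma mL0: "\<forall>k a i x v. i mod 2 = 0 \<longrightarrow> mL L1 L2 k a i x v = (if v mod 2 = 0 then L1 k a (i div 2) x (v div 2) else 0)"
  unfolding mL_def by auto

lemma mL1: "\<forall>k a i x v. i mod 2 = 1 \<longrightarrow> mL L1 L2 k a i x v = (if v mod 2 = 1 then L2 k a (i div 2) x (v div 2) else 0)"
  unfolding mL_def by auto

lemma lift_in_polytope:
  assumes hI: "\<forall>k<N. {i \<in> I k. i mod 2 = b} = (\<lambda>n. 2*n+b) ` Ib k"
    and hQ: "\<forall>k<N. {i \<in> Q k. i mod 2 = b} = (\<lambda>n. 2*n+b) ` Qb k" and b: "b < 2"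
    and finIQ: "\<forall>k<N. finite (I k) \<and> finite (Q k)"
    and d: "\<forall>k<N. d k \<in> Qb k" and P: "P \<in> det_extrema_polytope N Ib Qb"
  shows "liftP N I Q b d P \<in> det_extrema_polytope N I Q"
proof -
  have sub: "liftP N I Q b d ` {delta_process N Qb \<omega> | \<omega>. process_function N Ib Qb \<omega>}
      \<subseteq> {delta_process N Q \<omega> | \<omega>. process_function N I Q \<omega>}"
  proof
    fix y assume "y \<in> liftP N I Q b d ` {delta_process N Qb \<omega> | \<omega>. process_function N Ib Qb \<omega>}"
    then obtain \<omega> where y: "y = liftP N I Q b d (delta_process N Qb \<omega>)" and pf: "process_function N Ib Qb \<omega>" by blast
    obtain \<omega>' where "process_function N I Q \<omega>'" "liftP N I Q b d (delta_process N Qb \<omega>) = delta_process N Q \<omega>'"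
      using lift_delta[OF hI hQ b finIQ pf d] by blast
    then show "y \<in> {delta_process N Q \<omega> | \<omega>. process_function N I Q \<omega>}" using y by blast
  qed
  have "liftP N I Q b d P \<in> liftP N I Q b d ` det_extrema_polytope N Ib Qb" using P by blast
  also have "\<dots> = convex hull (liftP N I Q b d ` {delta_process N Qb \<omega> | \<omega>. process_function N Ib Qb \<omega>})"
    unfolding det_extrema_polytope_def by (rule convex_hull_linear_image[OF linear_liftP])
  also have "\<dots> \<subseteq> det_extrema_polytope N I Q"
    unfolding det_extrema_polytope_def by (rule hull_mono[OF sub])
  finally show ?thesis .
qed

lemma DC_Qne:
  assumes corr: "is_correlation N A X (compose N A X I Q L P)" and a0: "a0 \<in> Pi\<^sub>E {..<N} A"
  shows "\<forall>k<N. \<exists>q. q \<in> Q k"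
proof (rule ccontr)
  assume "\<not> ?thesis"
  then have "Pi\<^sub>E {..<N} Q = {}" by (auto simp: PiE_eq_empty_iff)
  then have z: "compose N A X I Q L P = (\<lambda>a x. 0)" by (rule compose_emptyQ)
  have "(\<Sum>x\<in>Pi\<^sub>E {..<N} X. compose N A X I Q L P a0 x) = 1"
    using corr a0 unfolding is_correlation_def by blast
  then show False unfolding z by simp
qed

lemma DC_convex:
  fixes A :: "nat \<Rightarrow> 'a set" and X :: "nat \<Rightarrow> 'x set"
  assumes fin: "\<forall>k<N. finite (A k) \<and> finite (X k)"
  shows "convex (DC N A X)"
proof (cases "Pi\<^sub>E {..<N} A = {}")
  case True
  have "DC N A X \<subseteq> {\<lambda>a x. 0}"
  proof
    fix p assume "p \<in> DC N A X"
    then have c: "is_correlation N A X p" unfolding DC_def by blast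
    have "p a x = 0" for a x
    proof (rule ccontr)
      assume "p a x \<noteq> 0"
      then have "a \<in> Pi\<^sub>E {..<N} A" using c unfolding is_correlation_def by blast
      then show False using True by blast
    qed
    then show "p \<in> {\<lambda>a x. 0}" by (auto simp: fun_eq_iff)
  qed
  then have "DC N A X = {} \<or> DC N A X = {\<lambda>a x. 0}" by (rule subset_singletonD)
  then show ?thesis by auto
next
  case False
  then obtain a0 where a0: "a0 \<in> Pi\<^sub>E {..<N} A" by blast
  show ?thesis
  proof (rule convexI)
    fix p1 p2 and u v :: real assume p1: "p1 \<in> DC N A X" and p2: "p2 \<in> DC N A X"
      and u: "0 \<le> u" and v: "0 \<le> v" and uv: "u + v = 1"
    obtain I1 Q1 L1 P1 where c1: "is_correlation N A X p1" and finIQ1: "\<forall>k<N. finite (I1 k) \<and> finite (Q1 k)"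
      and li1: "\<forall>k<N. local_intervention (A k) (I1 k) (X k) (Q1 k) (L1 k)"
      and P1: "P1 \<in> det_extrema_polytope N I1 Q1" and e1: "p1 = compose N A X I1 Q1 L1 P1"
      using p1 unfolding DC_def by blast
    obtain I2 Q2 L2 P2 where c2: "is_correlation N A X p2" and finIQ2: "\<forall>k<N. finite (I2 k) \<and> finite (Q2 k)"
      and li2: "\<forall>k<N. local_intervention (A k) (I2 k) (X k) (Q2 k) (L2 k)"
      and P2: "P2 \<in> det_extrema_polytope N I2 Q2" and e2: "p2 = compose N A X I2 Q2 L2 P2"
      using p2 unfolding DC_def by blast
    define d1 where "d1 k = (SOME q. q \<in> Q1 k)" for k
    define d2 where "d2 k = (SOME q. q \<in> Q2 k)" for k
    have d1: "\<forall>k<N. d1 k \<in> Q1 k"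
      using DC_Qne[OF c1[unfolded e1] a0] unfolding d1_def by (metis someI_ex)
    have d2: "\<forall>k<N. d2 k \<in> Q2 k"
      using DC_Qne[OF c2[unfolded e2] a0] unfolding d2_def by (metis someI_ex)
    define I where "I = mS I1 I2"
    define Q where "Q = mS Q1 Q2"
    define L where "L = mL L1 L2"
    define P where "P = u *\<^sub>R liftP N I Q 0 d1 P1 + v *\<^sub>R liftP N I Q 1 d2 P2"
    have hI0: "\<forall>k<N. {i \<in> I k. i mod 2 = 0} = (\<lambda>n. 2*n+0) ` I1 k" unfolding I_def by (intro allI impI mS0)
    have hI1: "\<forall>k<N. {i \<in> I k. i mod 2 = 1} = (\<lambda>n. 2*n+1) ` I2 k" unfolding I_def by (intro allI impI mS1)
    have hQ0: "\<forall>k<N. {i \<in> Q k. i mod 2 = 0} = (\<lambda>n. 2*n+0) ` Q1 k" unfolding Q_def by (intro allI impI mS0)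
    have hQ1: "\<forall>k<N. {i \<in> Q k. i mod 2 = 1} = (\<lambda>n. 2*n+1) ` Q2 k" unfolding Q_def by (intro allI impI mS1)
    have hL0: "\<forall>k a i x v. i mod 2 = 0 \<longrightarrow> L k a i x v = (if v mod 2 = 0 then L1 k a (i div 2) x (v div 2) else 0)"
      unfolding L_def by (rule mL0)
    have hL1: "\<forall>k a i x v. i mod 2 = 1 \<longrightarrow> L k a i x v = (if v mod 2 = 1 then L2 k a (i div 2) x (v div 2) else 0)"
      unfolding L_def by (rule mL1)
    have finIQ: "\<forall>k<N. finite (I k) \<and> finite (Q k)"
      using finIQ1 finIQ2 unfolding I_def Q_def mS_def by auto
    have li: "\<forall>k<N. local_intervention (A k) (I k) (X k) (Q k) (L k)"
    proof (intro allI impI)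
      fix k assume k: "k < N"
      show "local_intervention (A k) (I k) (X k) (Q k) (L k)"
        unfolding local_intervention_def
      proof (intro ballI)
        fix a i assume a: "a \<in> A k" and i: "i \<in> I k"
        show "(\<forall>x\<in>X k. \<forall>v\<in>Q k. 0 \<le> L k a i x v) \<and> (\<Sum>(x, v)\<in>X k \<times> Q k. L k a i x v) = 1"
        proof (cases "i mod 2 = 0")
          case True
          have "i \<in> {i \<in> I k. i mod 2 = 0}" using i True by blast
          then have "i \<in> (\<lambda>n. 2*n+0) ` I1 k" by (simp only: hI0[rule_format, OF k])
          then obtain n where n: "n \<in> I1 k" "i = 2*n+0" by (rule imageE)
          then have idv: "i div 2 \<in> I1 k" by simp
          show ?thesis
            by (rule li_tag[OF hQ0[rule_format, OF k] _ _ spec[OF hL0, of k] _ a True idv])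
               (simp, use finIQ k in blast, use li1 k in blast)
        next
          case False
          then have odd: "i mod 2 = 1" by presburger
          have "i \<in> {i \<in> I k. i mod 2 = 1}" using i odd by blast
          then have "i \<in> (\<lambda>n. 2*n+1) ` I2 k" by (simp only: hI1[rule_format, OF k])
          then obtain n where n: "n \<in> I2 k" "i = 2*n+1" by (rule imageE)
          then have idv: "i div 2 \<in> I2 k" by simp
          show ?thesis
            by (rule li_tag[OF hQ1[rule_format, OF k] _ _ spec[OF hL1, of k] _ a odd idv])
               (simp, use finIQ k in blast, use li2 k in blast)
        qed
      qed
    qed
    have Pin: "P \<in> det_extrema_polytope N I Q"
    proof -
      have l1: "liftP N I Q 0 d1 P1 \<in> det_extrema_polytope N I Q"
        by (rule lift_in_polytope[OF hI0 hQ0 _ finIQ d1 P1]) simp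
      have l2: "liftP N I Q 1 d2 P2 \<in> det_extrema_polytope N I Q"
        by (rule lift_in_polytope[OF hI1 hQ1 _ finIQ d2 P2]) simp
      show ?thesis unfolding P_def
        using convexD[OF _ l1 l2 u v uv] unfolding det_extrema_polytope_def by (simp add: convex_convex_hull)
    qed
    have eq: "u *\<^sub>R p1 + v *\<^sub>R p2 = compose N A X I Q L P"
    proof -
      have "compose N A X I Q L (liftP N I Q 0 d1 P1) = compose N A X I1 Q1 L1 P1"
        by (rule compose_lift[OF hI0 hQ0 _ hL0 finIQ]) simp
      moreover have "compose N A X I Q L (liftP N I Q 1 d2 P2) = compose N A X I2 Q2 L2 P2"
        by (rule compose_lift[OF hI1 hQ1 _ hL1 finIQ]) simp
      ultimately show ?thesis unfolding P_def compose_lin2 e1 e2 by simp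
    qed
    have corr: "is_correlation N A X (u *\<^sub>R p1 + v *\<^sub>R p2)" by (rule corr_convex[OF c1 c2 u v uv])
    show "u *\<^sub>R p1 + v *\<^sub>R p2 \<in> DC N A X"
      unfolding DC_def mem_Collect_eq
      apply (rule conjI[OF corr])
      apply (rule exI[of _ I], rule exI[of _ Q], rule exI[of _ L], rule exI[of _ P])
      using finIQ li Pin eq by blast
  qed
qed

lemma finite_det:
  fixes A :: "nat \<Rightarrow> 'a set" and X :: "nat \<Rightarrow> 'x set"
  assumes fin: "\<forall>k<N. finite (A k) \<and> finite (X k)"
  shows "finite {p. deterministic_correlation N A X p}"
proof -
  define F where "F f = (\<lambda>a x. if a \<in> Pi\<^sub>E {..<N} A \<and> x = f a then 1 else (0::real))" for f :: "(nat \<Rightarrow> 'a) \<Rightarrow> (nat \<Rightarrow> 'x)"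
  have finA: "finite (Pi\<^sub>E {..<N} A)" and finX: "finite (Pi\<^sub>E {..<N} X)"
    using fin by (auto intro!: finite_PiE)
  have "{p. deterministic_correlation N A X p} \<subseteq> F ` Pi\<^sub>E (Pi\<^sub>E {..<N} A) (\<lambda>_. Pi\<^sub>E {..<N} X)"
  proof
    fix p assume "p \<in> {p. deterministic_correlation N A X p}"
    then obtain f where f: "f \<in> Pi\<^sub>E {..<N} A \<rightarrow> Pi\<^sub>E {..<N} X"
      and p: "p = (\<lambda>a x. if a \<in> Pi\<^sub>E {..<N} A \<and> x = f a then 1 else 0)"
      unfolding deterministic_correlation_def by blast
    have "p = F (restrict f (Pi\<^sub>E {..<N} A))" unfolding p F_def by (intro ext) simp
    moreover have "restrict f (Pi\<^sub>E {..<N} A) \<in> Pi\<^sub>E (Pi\<^sub>E {..<N} A) (\<lambda>_. Pi\<^sub>E {..<N} X)"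
      using f unfolding restrict_PiE_iff Pi_iff by blast
    ultimately show "p \<in> F ` Pi\<^sub>E (Pi\<^sub>E {..<N} A) (\<lambda>_. Pi\<^sub>E {..<N} X)" by blast
  qed
  moreover have "finite (F ` Pi\<^sub>E (Pi\<^sub>E {..<N} A) (\<lambda>_. Pi\<^sub>E {..<N} X))"
    by (rule finite_imageI, rule finite_PiE[OF finA]) (rule finX)
  ultimately show ?thesis by (rule finite_subset)
qed

theorem mainTheorem6:
  fixes N :: nat and A :: "nat \<Rightarrow> 'a set" and X :: "nat \<Rightarrow> 'x set"
  assumes "\<forall>k<N. finite (A k) \<and> finite (X k)"
  shows "convex (DC N A X)
    \<and> DC N A X = convex hull (DC N A X \<inter> {p. deterministic_correlation N A X p})
    \<and> polytope (DC N A X)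
    \<and> (\<forall>p. p extreme_point_of (DC N A X) \<longrightarrow> deterministic_correlation N A X p)"
proof -
  let ?D = "DC N A X \<inter> {p. deterministic_correlation N A X p}"
  have cv: "convex (DC N A X)" by (rule DC_convex[OF assms])
  have eq: "DC N A X = convex hull ?D"
  proof
    show "DC N A X \<subseteq> convex hull ?D" by (rule DC_sub[OF assms])
    show "convex hull ?D \<subseteq> DC N A X" using hull_minimal[of ?D "DC N A X" convex] cv by blast
  qed
  have fD: "finite ?D" by (rule finite_subset[OF Int_lower2 finite_det[OF assms]])
  have poly: "polytope (DC N A X)" unfolding polytope_def by (intro exI[of _ ?D] conjI fD eq)
  have ext: "\<forall>p. p extreme_point_of (DC N A X) \<longrightarrow> deterministic_correlation N A X p"
  proof (intro allI impI)
    fix p assume h: "p extreme_point_of (DC N A X)"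
    have "p extreme_point_of (convex hull ?D)" by (rule subst[OF eq, of "\<lambda>S. p extreme_point_of S", OF h])
    then have "p \<in> ?D" by (rule extreme_point_of_convex_hull)
    then show "deterministic_correlation N A X p" by blast
  qed
  show ?thesis by (rule conjI[OF cv conjI[OF eq conjI[OF poly ext]]])
qed

end
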